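(* Let $r>0$, $\varepsilon_0>0$, let $n\ge 0$ be an integer, and let $\varphi_0$ be an axially symmetric external potential, harmonic inside the ball of radius $r$ centered at the origin, whose values on the axis are a polynomial of degree $n$: \[ -\varphi_0(s)=\sum_{i=1}^{n+1} b_i s^{i-1}, \] and set $b_i=0$ for $i>n+1$. Let $\sigma$ be the polynomial of degree at most $n$ on $[-r,r]$ satisfying \[ \int_{-r}^{r}\frac{r\,\sigma(z)}{\sqrt{s^2+r^2-2sz}}\,dz=-2\varepsilon_0\,\varphi_0(s)\qquad(-r<s<r). \] Then for every integer $m\ge 0$ the dipole moment of order $m$, $\mathcal D_m=2\pi r\int_{-r}^{r}z^m\sigma(z)\,dz$, equals \[ \mathcal D_m=2\pi\varepsilon_0\, r^{m+1}\sum_{\substack{i=\delta\\ i\equiv \delta\ (\mathrm{mod}\ 2)}}^{m+1}(2i-1)\,r^{i-1}F_{i,m+1}\,b_i , \] where $\delta=1$ if $m$ is even and $\delta=2$ if $m$ is odd (the sum runs over $i=\delta,\delta+2,\dots$ up to $m+1$), and $F_{ij}=\int_{-1}^{1}P_{i-1}(\eta)\,\eta^{j-1}\,d\eta$ with $P_k$ the Legendre polynomial of degree $k$.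
   Context: Physical setting: a grounded conducting ball of radius $r$ centered at the origin on the axis of an axially symmetric external field with potential $\varphi_0$ ($\varphi_0(s)$ denotes its value at axial coordinate $s$); $\varepsilon_0$ is the electric constant; $\sigma(z)$ is the induced surface charge density as a function of the axial coordinate $z$, and the integral equation expresses cancellation of the external potential inside the ball. *)

theory Defs
  imports "HOL-Analysis.Analysis" "HOL-Computational_Algebra.Polynomial"
begin

fun legendreP :: "nat \<Rightarrow> real \<Rightarrow> real" where
  "legendreP 0 x = 1"
| "legendreP (Suc 0) x = x"
| "legendreP (Suc (Suc k)) x =
     ((2 * real k + 3) * x * legendreP (Suc k) x - (real k + 1) * legendreP k x) / (real k + 2)"

definition F :: "nat \<Rightarrow> nat \<Rightarrow> real" where
  "F i j = integral {-1..1} (\<lambda>\<eta>. legendreP (i - 1) \<eta> * \<eta> ^ (j - 1))"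

definition dipole :: "real \<Rightarrow> (real \<Rightarrow> real) \<Rightarrow> nat \<Rightarrow> real" where
  "dipole r \<sigma> m = 2 * pi * r * integral {-r..r} (\<lambda>z. z ^ m * \<sigma> z)"

end

theory Submission
  imports Defs "HOL-Analysis.FPS_Convergence" "HOL-Computational_Algebra.Polynomial_FPS"
begin


lemma legendre_rec: "(real n + 2) * legendreP (Suc (Suc n)) x =
   (2 * real n + 3) * x * legendreP (Suc n) x - (real n + 1) * legendreP n x"
  by simp

lemma legendre_cont2: "continuous_on A (legendreP k) \<and> continuous_on A (legendreP (Suc k))"
proof (induction k)
  case 0 then show ?case by (auto intro!: continuous_intros simp: fun_eq_iff)
next
  case (Suc k)
  then have "continuous_on A (\<lambda>x. ((2 * real k + 3) * x * legendreP (Suc k) x - (real k + 1) * legendreP k x) / (real k + 2))"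
    by (auto intro!: continuous_intros)
  then show ?case using Suc by (simp add: fun_eq_iff)
qed

lemma legendre_cont: "continuous_on A (legendreP k)"
  using legendre_cont2 by blast

lemma legendre_bound: "\<bar>x\<bar> \<le> 1 \<Longrightarrow> \<bar>legendreP k x\<bar> \<le> 3 ^ k"
proof (induction k x rule: legendreP.induct)
  case (3 k x)
  have a: "\<bar>legendreP (Suc k) x\<bar> \<le> 3^Suc k" and b: "\<bar>legendreP k x\<bar> \<le> 3^k" using 3 by auto
  have "\<bar>(2 * real k + 3) * x * legendreP (Suc k) x - (real k + 1) * legendreP k x\<bar>
     \<le> (2 * real k + 3) * 3^Suc k + (real k + 1) * 3^k"
  proof -
    have "\<bar>(2 * real k + 3) * x * legendreP (Suc k) x\<bar> \<le> (2 * real k + 3) * 3^Suc k"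
      using a 3(3) by (simp add: abs_mult mult_mono')
    moreover have "\<bar>(real k + 1) * legendreP k x\<bar> \<le> (real k + 1) * 3^k"
      using b by (simp add: abs_mult mult_left_mono)
    ultimately show ?thesis by linarith
  qed
  also have "\<dots> = ((2 * real k + 3) * 3 + (real k + 1)) * 3^k" by (simp add: algebra_simps)
  also have "\<dots> \<le> ((real k + 2) * 9) * 3^k" by (rule mult_right_mono) auto
  also have "\<dots> = (real k + 2) * 3 ^ Suc (Suc k)" by simp
  finally show ?case by (simp add: divide_le_eq abs_divide mult.commute)
qed auto

definition Lfps :: "real \<Rightarrow> real fps" where "Lfps x = Abs_fps (\<lambda>k. legendreP k x)"
definition Qfps :: "real \<Rightarrow> real fps" where "Qfps x = 1 - fps_const (2*x) * fps_X + fps_X^2"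

lemma Q_deriv: "Qfps x * fps_deriv (Lfps x) = (fps_const x - fps_X) * Lfps x"
proof (rule fps_ext)
  fix n
  have e: "Qfps x * fps_deriv (Lfps x) = fps_deriv (Lfps x) - fps_const (2*x) * (fps_X * fps_deriv (Lfps x))
      + fps_X^2 * fps_deriv (Lfps x)"
    unfolding Qfps_def by (simp add: algebra_simps)
  have e2: "(fps_const x - fps_X) * Lfps x = fps_const x * Lfps x - fps_X * Lfps x" by (simp add: algebra_simps)
  show "fps_nth (Qfps x * fps_deriv (Lfps x)) n = fps_nth ((fps_const x - fps_X) * Lfps x) n"
  proof (cases n)
    case 0 then show ?thesis unfolding e e2 by (simp add: Lfps_def fps_X_power_mult_nth)
  next
    case (Suc k) note k = Suc
    show ?thesis
    proof (cases k)
      case 0 then show ?thesis using k unfolding e e2 by (simp add: Lfps_def fps_X_power_mult_nth field_simps)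
    next
      case (Suc j)
      have "(real (Suc j) + 2) * legendreP (Suc (Suc (Suc j))) x =
         (2 * real (Suc j) + 3) * x * legendreP (Suc (Suc j)) x - (real (Suc j) + 1) * legendreP (Suc j) x"
        by (rule legendre_rec)
      then show ?thesis using k Suc unfolding e e2 by (simp add: Lfps_def fps_X_power_mult_nth del: legendreP.simps) (simp add: algebra_simps del: legendreP.simps)
    qed
  qed
qed

lemma LLQ: "Lfps x * Lfps x * Qfps x = 1"
proof -
  have c2: "fps_const (2*x) = 2 * fps_const x"
    by (metis fps_const_mult fps_numeral_fps_const)
  have d: "fps_deriv (Qfps x) = 2 * (fps_X - fps_const x)"
    unfolding Qfps_def power2_eq_square c2 by (simp add: algebra_simps)
  have "fps_deriv (Lfps x * Lfps x * Qfps x) =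
     2 * Lfps x * (Qfps x * fps_deriv (Lfps x)) + Lfps x * Lfps x * fps_deriv (Qfps x)"
    by (simp add: algebra_simps)
  also have "\<dots> = 0" unfolding Q_deriv d by (simp add: algebra_simps)
  finally have "Lfps x * Lfps x * Qfps x = fps_const (fps_nth (Lfps x * Lfps x * Qfps x) 0)"
    by (simp only: fps_deriv_eq_0_iff)
  also have "\<dots> = 1" by (simp add: Lfps_def Qfps_def)
  finally show ?thesis .
qed


lemma L_radius: assumes "\<bar>x\<bar> \<le> 1" shows "fps_conv_radius (Lfps x) \<ge> ereal (1/4)"
proof -
  have "summable (\<lambda>n. fps_nth (Lfps x) n * (1/4::real) ^ n)"
  proof (rule summable_comparison_test)
    show "\<exists>N. \<forall>n\<ge>N. norm (fps_nth (Lfps x) n * (1/4::real) ^ n) \<le> (3/4) ^ n"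
    proof (intro exI allI impI)
      fix n :: nat
      have "\<bar>legendreP n x\<bar> * (1/4) ^ n \<le> 3 ^ n * (1/4::real) ^ n"
        by (rule mult_right_mono) (use legendre_bound assms in auto)
      also have "\<dots> = (3/4) ^ n" by (simp add: power_divide)
      finally show "norm (fps_nth (Lfps x) n * (1/4::real) ^ n) \<le> (3/4) ^ n"
        by (simp add: Lfps_def abs_mult)
    qed
    show "summable (\<lambda>n. (3/4::real) ^ n)" by (rule summable_geometric) simp
  qed
  then have "conv_radius (fps_nth (Lfps x)) \<ge> norm (1/4::real)" by (rule conv_radius_geI)
  then show ?thesis by (simp add: fps_conv_radius_def)
qed

lemma Q_poly: "Qfps x = fps_of_poly [:1, -2*x, 1:]"
  unfolding Qfps_def by (simp add: fps_of_poly_pCons algebra_simps power2_eq_square)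

lemma Q_radius: "fps_conv_radius (Qfps x) = \<infinity>"
  unfolding Q_poly by simp

lemma Q_eval: "eval_fps (Qfps x) t = 1 - 2*x*t + t^2"
  unfolding Q_poly by (simp add: algebra_simps power2_eq_square)

lemma gen_fun:
  assumes x: "\<bar>x\<bar> \<le> 1" and t: "\<bar>t\<bar> < 1/4"
  shows "(\<lambda>k. legendreP k x * t^k) sums (1 / sqrt (1 - 2*x*t + t^2))"
proof -
  define g where "g = eval_fps (Lfps x)"
  have rad: "\<And>u::real. \<bar>u\<bar> < 1/4 \<Longrightarrow> norm u < fps_conv_radius (Lfps x)"
  proof -
    fix u :: real assume "\<bar>u\<bar> < 1/4"
    then have "ereal (norm u) < ereal (1/4)" by simp
    then show "norm u < fps_conv_radius (Lfps x)" using L_radius[OF x] by (rule order.strict_trans2)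
  qed
  have sq: "g u * g u * (1 - 2*x*u + u^2) = 1" if "\<bar>u\<bar> < 1/4" for u
  proof -
    have "eval_fps (Lfps x * Lfps x * Qfps x) u = 1" by (simp add: LLQ)
    moreover have "eval_fps (Lfps x * Lfps x * Qfps x) u = g u * g u * eval_fps (Qfps x) u"
    proof -
      have r1: "norm u < fps_conv_radius (Lfps x * Lfps x)"
        using rad[OF that] fps_conv_radius_mult[of "Lfps x" "Lfps x"] by (simp add: order.strict_trans2)
      have "eval_fps (Lfps x * Lfps x * Qfps x) u = eval_fps (Lfps x * Lfps x) u * eval_fps (Qfps x) u"
        by (rule eval_fps_mult[OF r1]) (simp add: Q_radius)
      also have "eval_fps (Lfps x * Lfps x) u = g u * g u"
        unfolding g_def by (rule eval_fps_mult[OF rad[OF that] rad[OF that]])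
      finally show ?thesis .
    qed
    ultimately show ?thesis by (simp add: Q_eval)
  qed
  have cont: "isCont g u" if "\<bar>u\<bar> < 1/4" for u
    unfolding g_def using continuous_eval_fps[OF rad[OF that], of UNIV] by simp
  have g0: "g 0 = 1" by (simp add: g_def eval_fps_at_0 Lfps_def)
  have pos: "g t > 0"
  proof (rule ccontr)
    assume "\<not> g t > 0"
    then have "g t \<le> 0" by simp
    have "\<exists>u. \<bar>u\<bar> < 1/4 \<and> g u = 0"
    proof (cases "t \<ge> 0")
      case True
      have "\<forall>y. 0 \<le> y \<and> y \<le> t \<longrightarrow> isCont g y" using cont t by auto
      from IVT2[where f=g and a=0 and b=t and y=0, OF \<open>g t \<le> 0\<close> _ True this]
      obtain u where "0 \<le> u \<and> u \<le> t \<and> g u = 0" using g0 by auto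
      then show ?thesis using t by (intro exI[of _ u]) auto
    next
      case False
      have "\<forall>y. t \<le> y \<and> y \<le> 0 \<longrightarrow> isCont g y" using cont t by auto
      from IVT[where f=g and a=t and b=0 and y=0, OF \<open>g t \<le> 0\<close> _ _ this]
      obtain u where "t \<le> u \<and> u \<le> 0 \<and> g u = 0" using g0 False by auto
      then show ?thesis using t by (intro exI[of _ u]) auto
    qed
    then show False using sq by (metis mult_zero_left zero_neq_one)
  qed
  have "1 - 2*x*t + t^2 = (1 / g t)^2" using sq[OF t] pos
    by (simp add: field_simps power2_eq_square)
  then have "sqrt (1 - 2*x*t + t^2) = 1 / g t" using pos by simp
  then have "g t = 1 / sqrt (1 - 2*x*t + t^2)" using pos by simp
  moreover have "(\<lambda>k. legendreP k x * t^k) sums g t"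
    using sums_eval_fps[OF rad[OF t]] by (simp add: g_def Lfps_def)
  ultimately show ?thesis by simp
qed


lemma series_integral:
  fixes \<sigma> :: "real poly"
  assumes r: "r > 0" and s: "\<bar>s\<bar> < r/4"
  shows "(\<lambda>k. integral {-r..r} (\<lambda>z. poly \<sigma> z * legendreP k (z/r)) * (s/r)^k) sums
           integral {-r..r} (\<lambda>z. r * poly \<sigma> z / sqrt (s\<^sup>2 + r\<^sup>2 - 2 * s * z))"
proof -
  define t where "t = s / r"
  have t: "\<bar>t\<bar> < 1/4" using s r by (simp add: t_def abs_divide divide_less_eq)
  define f where "f N z = (\<Sum>k<N. poly \<sigma> z * legendreP k (z/r) * t^k)" for N z
  define g where "g z = poly \<sigma> z * (1 / sqrt (1 - 2*(z/r)*t + t^2))" for z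
  have contP: "continuous_on {-r..r} (\<lambda>z. poly \<sigma> z * legendreP k (z/r))" for k
    by (intro continuous_intros continuous_on_compose2[OF legendre_cont[of UNIV k]]) (use r in auto)
  obtain M where M: "M > 0" "\<And>z. z \<in> {-r..r} \<Longrightarrow> \<bar>poly \<sigma> z\<bar> \<le> M"
  proof -
    have "compact (poly \<sigma> ` {-r..r})"
      by (rule compact_continuous_image) (auto intro: continuous_intros)
    then have "bounded (poly \<sigma> ` {-r..r})" by (rule compact_imp_bounded)
    then obtain M where "M > 0" "\<And>y. y \<in> poly \<sigma> ` {-r..r} \<Longrightarrow> norm y \<le> M"
      by (auto simp: bounded_pos)
    then show ?thesis using that by auto
  qed
  have fint: "f N integrable_on {-r..r}" for N
    unfolding f_def
    by (intro integrable_continuous_interval continuous_intros continuous_on_compose2[OF legendre_cont[of UNIV]]) (use r in auto)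
  have hint: "(\<lambda>z. 4 * M) integrable_on {-r..r}" by (intro integrable_continuous_interval continuous_intros)
  have le: "norm (f N z) \<le> 4 * M" if z: "z \<in> {-r..r}" for N z
  proof -
    have x: "\<bar>z/r\<bar> \<le> 1" using z r by (auto simp: abs_divide divide_le_eq abs_le_iff)
    have "norm (f N z) \<le> (\<Sum>k<N. \<bar>poly \<sigma> z * legendreP k (z/r) * t^k\<bar>)"
      unfolding f_def real_norm_def by (rule sum_abs)
    also have "\<dots> \<le> (\<Sum>k<N. M * (3/4)^k)"
    proof (rule sum_mono)
      fix k
      have "\<bar>legendreP k (z/r)\<bar> * \<bar>t\<bar>^k \<le> 3^k * (1/4)^k"
        by (intro mult_mono power_mono legendre_bound x) (use t in auto)
      also have "\<dots> = (3/4)^k" by (simp add: power_divide)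
      finally have "\<bar>legendreP k (z/r)\<bar> * \<bar>t\<bar>^k \<le> (3/4)^k" .
      then have "\<bar>poly \<sigma> z\<bar> * (\<bar>legendreP k (z/r)\<bar> * \<bar>t\<bar>^k) \<le> M * (3/4)^k"
        by (intro mult_mono M z) (use M in auto)
      then show "\<bar>poly \<sigma> z * legendreP k (z/r) * t^k\<bar> \<le> M * (3/4)^k"
        by (simp add: abs_mult power_abs mult.assoc)
    qed
    also have "\<dots> = M * (\<Sum>k<N. (3/4::real)^k)" by (simp add: sum_distrib_left)
    also have "(\<Sum>k<N. (3/4::real)^k) = ((3/4)^N - 1) / (3/4 - 1)"
      by (rule geometric_sum) simp
    also have "\<dots> \<le> 4" by simp
    finally show ?thesis using M by (simp add: mult_left_mono)
  qed
  have conv: "(\<lambda>N. f N z) \<longlonglongrightarrow> g z" if z: "z \<in> {-r..r}" for z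
  proof -
    have x: "\<bar>z/r\<bar> \<le> 1" using z r by (auto simp: abs_divide divide_le_eq abs_le_iff)
    have "(\<lambda>N. \<Sum>k<N. legendreP k (z/r) * t^k) \<longlonglongrightarrow> 1 / sqrt (1 - 2*(z/r)*t + t^2)"
      using gen_fun[OF x t] by (simp add: sums_def)
    then have "(\<lambda>N. poly \<sigma> z * (\<Sum>k<N. legendreP k (z/r) * t^k)) \<longlonglongrightarrow> g z"
      unfolding g_def by (rule tendsto_mult_left)
    then show ?thesis by (simp add: f_def sum_distrib_left mult.assoc)
  qed
  have lim: "(\<lambda>N. integral {-r..r} (f N)) \<longlonglongrightarrow> integral {-r..r} g"
    using dominated_convergence(2)[OF fint hint le conv] by blast
  have intf: "integral {-r..r} (f N) = (\<Sum>k<N. integral {-r..r} (\<lambda>z. poly \<sigma> z * legendreP k (z/r)) * t^k)" for N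
    unfolding f_def
    by (subst integral_sum) (auto intro!: integrable_continuous_interval continuous_on_mult_right contP)
  have intg: "integral {-r..r} g = integral {-r..r} (\<lambda>z. r * poly \<sigma> z / sqrt (s\<^sup>2 + r\<^sup>2 - 2 * s * z))"
  proof (rule integral_cong)
    fix z assume "z \<in> {-r..r}"
    have "s\<^sup>2 + r\<^sup>2 - 2 * s * z = r^2 * (1 - 2*(z/r)*t + t^2)"
      using r by (simp add: t_def field_simps power2_eq_square)
    then have "sqrt (s\<^sup>2 + r\<^sup>2 - 2 * s * z) = r * sqrt (1 - 2*(z/r)*t + t^2)"
      using r by (simp add: real_sqrt_mult)
    then show "g z = r * poly \<sigma> z / sqrt (s\<^sup>2 + r\<^sup>2 - 2 * s * z)"
      using r by (simp add: g_def)
  qed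
  show ?thesis unfolding sums_def using lim by (simp add: intf intg t_def)
qed



definition Jf :: "nat \<Rightarrow> nat \<Rightarrow> real" where
  "Jf k j = 2^(k+1) * fact (k+2*j) * fact (k+j) / (fact j * fact (2*k+2*j+1))"

definition Jc :: "nat \<Rightarrow> nat \<Rightarrow> real" where
  "Jc k m = (if k \<le> m \<and> even (m-k) then Jf k ((m-k) div 2) else 0)"

lemma factS: "(fact (Suc n)::real) = (real n + 1) * fact n"
  by (simp add: algebra_simps)

lemma factE: "m = Suc n \<Longrightarrow> (fact m::real) = (real n + 1) * fact n"
  by (simp add: algebra_simps)

lemma factE2: "m = Suc (Suc n) \<Longrightarrow> (fact m::real) = (real n + 2) * (real n + 1) * fact n"
  by (simp add: algebra_simps)

lemma Jf_rec0: "(2*real k+3) * Jf (k+1) 0 = (real k+1) * Jf k 0"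
proof -
  define a where "a = (fact k :: real)"
  define d where "d = (fact (2*k+1) :: real)"
  have pos: "a > 0" "d > 0" by (simp_all add: a_def d_def)
  have J1: "Jf (k+1) 0 = 2^(k+2) * ((real k+1)*a) * ((real k+1)*a) / ((2*real k+3)*(2*real k+2)*d)"
  proof -
    have c: "(fact (k+1+2*0)::real) = (real k+1) * a" "(fact (k+1+0)::real) = (real k+1) * a"
      unfolding a_def by (rule factE, simp)+
    have d2: "(fact (2*(k+1)+2*0+1)::real) = (real (2*k+1) + 2) * (real (2*k+1) + 1) * d"
      unfolding d_def by (rule factE2) simp
    show ?thesis unfolding Jf_def c d2 by (simp add: algebra_simps)
  qed
  have J0: "Jf k 0 = 2^(k+1) * a * a / d" unfolding Jf_def a_def d_def by simp
  define P where "P = 2*real k+3"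
  define Q where "Q = 2*real k+2"
  have nz: "P \<noteq> 0" "Q \<noteq> 0" unfolding P_def Q_def by linarith+
  have "(2*real k+3) * Jf (k+1) 0 = P * (2^(k+2) * ((real k+1)*a) * ((real k+1)*a) / (P*Q*d))"
    unfolding J1 P_def Q_def by simp
  also have "\<dots> = 2^(k+2) * ((real k+1)*a) * ((real k+1)*a) / (Q*d)" using nz by simp
  also have "\<dots> = (real k+1) * Jf k 0" unfolding J0 using pos nz
    by (simp add: field_simps) (simp add: Q_def algebra_simps)
  finally show ?thesis .
qed

lemma Jf_rec: "(real k+2) * Jf (k+2) i = (2*real k+3) * Jf (k+1) (i+1) - (real k+1) * Jf k (i+1)"
proof -
  define a where "a = (fact (k+2*i+2) :: real)"
  define b where "b = (fact (k+i+1) :: real)"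
  define c where "c = (fact i :: real)"
  define d where "d = (fact (2*k+2*i+3) :: real)"
  have pos: "a > 0" "b > 0" "c > 0" "d > 0" by (simp_all add: a_def b_def c_def d_def)
  have e1: "(fact (k+1+2*(i+1))::real) = (real (k+2*i+2) + 1) * a"
    unfolding a_def by (rule factE) simp
  have e2: "(fact (k+1+(i+1))::real) = (real (k+i+1) + 1) * b"
    unfolding b_def by (rule factE) simp
  have e3: "(fact (i+1)::real) = (real i+1) * c"
    unfolding c_def by (rule factE) simp
  have e4: "(fact (2*(k+1)+2*(i+1)+1)::real) = (real (2*k+2*i+3) + 2) * (real (2*k+2*i+3) + 1) * d"
    unfolding d_def by (rule factE2) simp
  have e5: "(fact (k+2+2*i)::real) = a" unfolding a_def by (rule arg_cong[where f=fact]) simp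
  have e6: "(fact (k+2+i)::real) = (real (k+i+1) + 1) * b"
    unfolding b_def by (rule factE) simp
  have e7: "(fact (2*(k+2)+2*i+1)::real) = (real (2*k+2*i+3) + 2) * (real (2*k+2*i+3) + 1) * d"
    unfolding d_def by (rule factE2) simp
  have e8: "(fact (k+2*(i+1))::real) = a" unfolding a_def by (rule arg_cong[where f=fact]) simp
  have e9: "(fact (k+(i+1))::real) = b" unfolding b_def by (rule arg_cong[where f=fact]) simp
  have e10: "(fact (2*k+2*(i+1)+1)::real) = d" unfolding d_def by (rule arg_cong[where f=fact]) simp
  define P where "P = 2*real k+2*real i+5"
  define Q where "Q = 2*real k+2*real i+4"
  define R where "R = real i + 1"
  have nz: "P \<noteq> 0" "Q \<noteq> 0" "R \<noteq> 0" unfolding P_def Q_def R_def by linarith+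
  have r: "real (2*k+2*i+3) + 2 = P" "real (2*k+2*i+3) + 1 = Q" "real i + 1 = R"
    unfolding P_def Q_def R_def by simp_all
  show ?thesis unfolding Jf_def e1 e2 e3 e4 e5 e6 e7 e8 e9 e10 r c_def[symmetric]
    using pos nz by (simp add: field_simps) (simp add: P_def Q_def R_def algebra_simps)
qed




lemma Jf0: "Jf 0 j = 2 / (2*real j + 1)"
proof -
  define A where "A = (fact (2*j) :: real)"
  define B where "B = (fact j :: real)"
  have p: "A > 0" "B > 0" unfolding A_def B_def by simp_all
  have "(fact (2*0+2*j+1)::real) = (real (2*j)+1) * A" unfolding A_def by (rule factE) simp
  moreover have "(fact (0+2*j)::real) = A" "(fact (0+j)::real) = B" unfolding A_def B_def by simp_all
  ultimately have "Jf 0 j = 2 * A * B / (B * ((2*real j+1) * A))" unfolding Jf_def B_def[symmetric] by simp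
  then show ?thesis using p by simp
qed

lemma Jf1: "Jf 1 j = 2 / (2*real j + 3)"
proof -
  define A where "A = (fact (2*j+1) :: real)"
  define B where "B = (fact j :: real)"
  have p: "A > 0" "B > 0" unfolding A_def B_def by simp_all
  have "(fact (2*1+2*j+1)::real) = (real (2*j+1)+2) * (real (2*j+1)+1) * A" unfolding A_def by (rule factE2) simp
  moreover have "(fact (1+2*j)::real) = A" unfolding A_def by (rule arg_cong[where f=fact]) simp
  moreover have "(fact (1+j)::real) = (real j+1) * B" unfolding B_def by (rule factE) simp
  ultimately have "Jf 1 j = 4 * A * ((real j + 1) * B) / (B * ((2*real j+3) * (2*real j+2) * A))"
    unfolding Jf_def B_def[symmetric] by (simp add: algebra_simps)
  also have "\<dots> = 4 * (real j + 1) / ((2*real j+3) * (2*real j+2))" using p by simp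
  also have "\<dots> = (2 * (2*real j+2)) / ((2*real j+3) * (2*real j+2))" by (simp add: algebra_simps)
  also have "\<dots> = 2 / (2*real j + 3)" by (rule nonzero_mult_divide_mult_cancel_right) simp
  finally show ?thesis .
qed

definition Iint :: "nat \<Rightarrow> nat \<Rightarrow> real" where
  "Iint k m = integral {-1..1} (\<lambda>x. legendreP k x * x^m)"

lemma mono_int: "integral {-1..1} (\<lambda>x::real. x^m) = (if even m then 2 / (real m + 1) else 0)"
proof -
  have "((\<lambda>x::real. x^m) has_integral ((1::real)^(m+1)/(real m+1) - (-1)^(m+1)/(real m+1))) {-1..1}"
  proof (rule fundamental_theorem_of_calculus)
    fix x :: real assume "x \<in> {-1..1}"
    have "((\<lambda>x::real. x^(m+1)/(real m+1)) has_real_derivative (real (m+1) * x^(m+1 - Suc 0)) / (real m+1)) (at x within {-1..1})"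
      by (intro DERIV_cdivide DERIV_pow)
    moreover have "(real (m+1) * x^(m+1 - Suc 0)) / (real m+1) = x^m" by (simp add: field_simps)
    ultimately have "((\<lambda>x::real. x^(m+1)/(real m+1)) has_real_derivative x^m) (at x within {-1..1})"
      by simp
    then show "((\<lambda>x::real. x^(m+1)/(real m+1)) has_vector_derivative x^m) (at x within {-1..1})"
      by (simp add: has_real_derivative_iff_has_vector_derivative)
  qed simp
  moreover have "(1::real)^(m+1)/(real m+1) - (-1)^(m+1)/(real m+1) = (if even m then 2/(real m+1) else 0)"
    by (cases "even m") (simp_all add: add_divide_distrib[symmetric])
  ultimately show ?thesis by (simp add: integral_unique)
qed

lemma legendre_int: "(\<lambda>x. legendreP k x * x^m) integrable_on {-1..1}"
  by (intro integrable_continuous_interval continuous_intros legendre_cont)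

lemma Iint_rec: "(real k+2) * Iint (k+2) m = (2*real k+3) * Iint (k+1) (m+1) - (real k+1) * Iint k m"
proof -
  have "\<And>x. legendreP (k+2) x * x^m =
     ((2*real k+3) * (legendreP (k+1) x * x^(m+1)) - (real k+1) * (legendreP k x * x^m)) / (real k + 2)"
    by (simp add: field_simps)
  then have "Iint (k+2) m = integral {-1..1} (\<lambda>x. ((2*real k+3) * (legendreP (k+1) x * x^(m+1)) - (real k+1) * (legendreP k x * x^m)) / (real k + 2))"
    unfolding Iint_def by presburger
  also have "\<dots> = ((2*real k+3) * Iint (k+1) (m+1) - (real k+1) * Iint k m) / (real k + 2)"
    unfolding Iint_def divide_inverse
    by (subst integral_mult_left, subst integral_diff)
       (auto intro!: integrable_continuous_interval continuous_intros legendre_cont)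
  finally show ?thesis by (simp add: field_simps)
qed

lemma Jc_rec: "(real k+2) * Jc (k+2) m = (2*real k+3) * Jc (k+1) (m+1) - (real k+1) * Jc k m"
proof (cases "k \<le> m \<and> even (m-k)")
  case False
  then show ?thesis unfolding Jc_def by auto
next
  case True
  then obtain j where m: "m = k + 2*j" by (metis dvd_def le_add_diff_inverse)
  show ?thesis
  proof (cases j)
    case 0 then show ?thesis using Jf_rec0[of k] unfolding Jc_def m by simp
  next
    case (Suc i)
    have "k + 2 \<le> m" "m - (k+2) = 2*i" "m + 1 - (k+1) = 2*(i+1)" "m - k = 2*(i+1)" using m Suc by auto
    then show ?thesis using Jf_rec[of k i] unfolding Jc_def by simp
  qed
qed

lemma Iint_Jc: "Iint k m = Jc k m \<and> Iint (Suc k) m = Jc (Suc k) m"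
proof (induction k arbitrary: m)
  case 0
  have a: "Iint 0 m = Jc 0 m" for m
  proof -
    have "Iint 0 m = (if even m then 2 / (real m + 1) else 0)" unfolding Iint_def using mono_int by simp
    moreover note Jf0
    ultimately show ?thesis unfolding Jc_def by (auto elim!: evenE simp: algebra_simps)
  qed
  have b: "Iint 1 m = Jc 1 m"
  proof -
    have "Iint 1 m = Iint 0 (m+1)" unfolding Iint_def by (simp add: field_simps)
    also have "\<dots> = Jc 0 (m+1)" by (rule a)
    also have "\<dots> = Jc 1 m"
    proof -
      show ?thesis unfolding Jc_def Jf0 Jf1 by (auto elim!: evenE oddE simp: algebra_simps)
    qed
    finally show ?thesis .
  qed
  show ?case using a b by simp
next
  case (Suc k)
  have "(real k+2) * Iint (k+2) m = (real k+2) * Jc (k+2) m"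
    unfolding Iint_rec Jc_rec using Suc.IH[of m] Suc.IH[of "m+1"] by simp
  then have "Iint (Suc (Suc k)) m = Jc (Suc (Suc k)) m" by simp
  then show ?case using Suc.IH by simp
qed


lemma Iint_eq: "Iint k m = Jc k m" using Iint_Jc by blast

lemma Iint_zero: "\<not> (k \<le> m \<and> even (m-k)) \<Longrightarrow> Iint k m = 0"
  unfolding Iint_eq Jc_def by (rule if_not_P)

lemma bonnet2: "(real j+1) * legendreP (j+1) x + real j * legendreP (j-1) x = (2*real j+1) * x * legendreP j x"
proof (cases j)
  case 0 then show ?thesis by simp
next
  case (Suc n)
  have "(real n + 2) * legendreP (Suc (Suc n)) x =
   (2 * real n + 3) * x * legendreP (Suc n) x - (real n + 1) * legendreP n x"
    by (rule legendre_rec)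
  then show ?thesis using Suc by (simp add: algebra_simps del: legendreP.simps)
qed

lemma Ishift: "(2*real k+1) * Iint k (m+1) = real k * Iint (k-1) m + (real k+1) * Iint (k+1) m"
proof (cases k)
  case 0
  have "Iint 0 (m+1) = Iint 1 m" unfolding Iint_def by (simp add: algebra_simps)
  then show ?thesis using 0 by simp
next
  case (Suc n)
  have "(real n+2) * Iint (n+2) m = (2*real n+3) * Iint (n+1) (m+1) - (real n+1) * Iint n m"
    by (rule Iint_rec)
  then show ?thesis using Suc by (simp add: algebra_simps)
qed

lemma expansion: "x^m = (\<Sum>k\<le>m. (2*real k+1)/2 * Iint k m * legendreP k x)"
proof (induction m)
  case 0
  have "Iint 0 0 = 2" by (simp add: Iint_eq Jc_def Jf0)
  then show ?case by simp
next
  case (Suc m)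
  define g where "g k = Iint k m / 2 * real k * legendreP (k-1) x" for k
  have "x^Suc m = x * (\<Sum>k\<le>m. (2*real k+1)/2 * Iint k m * legendreP k x)"
    using Suc.IH by simp
  also have "\<dots> = (\<Sum>k\<le>m. Iint k m / 2 * ((real k+1) * legendreP (k+1) x + real k * legendreP (k-1) x))"
    unfolding sum_distrib_left by (rule sum.cong) (simp_all only: bonnet2, simp add: algebra_simps del: legendreP.simps)
  also have "\<dots> = (\<Sum>k\<le>m. Iint k m / 2 * (real k+1) * legendreP (k+1) x) + (\<Sum>k\<le>m. g k)"
    unfolding g_def sum.distrib[symmetric] by (rule sum.cong) (simp_all add: algebra_simps)
  also have "(\<Sum>k\<le>m. g k) = (\<Sum>k\<le>Suc m. g (Suc k))"
  proof -
    have "(\<Sum>k\<le>Suc m. g (Suc k)) = (\<Sum>k\<le>Suc (Suc m). g k)"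
      by (subst sum.atMost_Suc_shift) (simp add: g_def)
    also have "\<dots> = (\<Sum>k\<le>m. g k)"
      using Iint_zero[of "Suc m" m] Iint_zero[of "Suc (Suc m)" m] by (simp add: g_def)
    finally show ?thesis by simp
  qed
  also have "(\<Sum>k\<le>m. Iint k m / 2 * (real k+1) * legendreP (k+1) x) =
      (\<Sum>k\<le>Suc m. real k * Iint (k-1) m / 2 * legendreP k x)"
    by (subst sum.atMost_Suc_shift) (simp add: algebra_simps del: legendreP.simps)
  also have "(\<Sum>k\<le>Suc m. real k * Iint (k-1) m / 2 * legendreP k x) + (\<Sum>k\<le>Suc m. g (Suc k))
      = (\<Sum>k\<le>Suc m. (2*real k+1)/2 * Iint k (Suc m) * legendreP k x)"
    unfolding sum.distrib[symmetric]
  proof (rule sum.cong)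
    fix k
    have sh: "(2*real k+1)/2 * Iint k (Suc m) = (real k * Iint (k-1) m + (real k+1) * Iint (k+1) m) / 2"
      using Ishift[of k m] by simp
    then show "real k * Iint (k-1) m / 2 * legendreP k x + g (Suc k) = (2*real k+1)/2 * Iint k (Suc m) * legendreP k x"
      by (simp only: sh) (simp add: g_def algebra_simps add_divide_distrib del: legendreP.simps)
  qed simp
  finally show ?case .
qed


lemma powser_head0:
  fixes d :: "nat \<Rightarrow> real"
  assumes del: "\<delta> > 0" and h: "\<And>t. t \<noteq> 0 \<Longrightarrow> \<bar>t\<bar> < \<delta> \<Longrightarrow> (\<lambda>k. d k * t^k) sums 0"
  shows "d 0 = 0"
proof -
  have "((\<lambda>_::real. 0::real) \<longlongrightarrow> d 0) (at 0)"
    by (rule powser_limit_0_strong[where a=d, OF del]) (use h in auto)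
  then have "0 = d 0" by (rule LIM_const_eq)
  then show ?thesis by simp
qed

lemma powser_unique0:
  fixes d :: "nat \<Rightarrow> real"
  assumes del: "\<delta> > 0" and h: "\<And>t. t \<noteq> 0 \<Longrightarrow> \<bar>t\<bar> < \<delta> \<Longrightarrow> (\<lambda>k. d k * t^k) sums 0"
  shows "d k = 0"
  using h
proof (induction k arbitrary: d)
  case 0
  then show ?case using powser_head0[OF del] by blast
next
  case (Suc k)
  have d0: "d 0 = 0" using powser_head0[OF del] Suc.prems by blast
  have "(\<lambda>n. d (Suc n) * t^n) sums 0" if t: "t \<noteq> 0" "\<bar>t\<bar> < \<delta>" for t
  proof -
    have s: "(\<lambda>n. d n * t^n) sums 0" using Suc.prems t by auto
    then have sm: "summable (\<lambda>n. d n * t^n)" by (rule sums_summable)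
    have "suminf (\<lambda>n. d (Suc n) * t ^ n) * t = suminf (\<lambda>n. d n * t ^ n) - d 0"
      by (rule powser_split_head(2)[OF sm])
    then have "suminf (\<lambda>n. d (Suc n) * t ^ n) * t = 0" using s d0 sums_unique by fastforce
    then have "suminf (\<lambda>n. d (Suc n) * t ^ n) = 0" using t by simp
    moreover have "summable (\<lambda>n. d (Suc n) * t ^ n)" by (rule powser_split_head(3)[OF sm])
    ultimately show ?thesis by (metis summable_sums)
  qed
  then show ?case using Suc.IH[of "\<lambda>n. d (Suc n)"] by blast
qed

theorem theorem2:
  fixes r \<epsilon>0 :: real and n :: nat and b :: "nat \<Rightarrow> real"
    and \<phi>0 :: "real \<Rightarrow> real" and \<sigma> :: "real poly"
  assumes r_pos: "r > 0" and eps_pos: "\<epsilon>0 > 0"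
    and b_deg: "b (n + 1) \<noteq> 0"
    and b_zero: "\<And>i. i > n + 1 \<Longrightarrow> b i = 0"
    and phi_axis: "\<And>s. s \<in> {-r<..<r} \<Longrightarrow> - \<phi>0 s = (\<Sum>i=1..n+1. b i * s ^ (i - 1))"
    and sigma_deg: "degree \<sigma> \<le> n"
    and integral_eq: "\<And>s. s \<in> {-r<..<r} \<Longrightarrow>
        integral {-r..r} (\<lambda>z. r * poly \<sigma> z / sqrt (s\<^sup>2 + r\<^sup>2 - 2 * s * z))
          = - 2 * \<epsilon>0 * \<phi>0 s"
  shows "\<forall>m::nat. dipole r (poly \<sigma>) m =
     2 * pi * \<epsilon>0 * r ^ (m + 1) *
       (\<Sum>i \<in> {i \<in> {(if even m then 1 else 2)..m + 1}.
                    i mod 2 = (if even m then 1 else 2) mod 2}.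
          (2 * real i - 1) * r ^ (i - 1) * F i (m + 1) * b i)"
proof
  fix m :: nat
  define A where "A k = integral {-r..r} (\<lambda>z. poly \<sigma> z * legendreP k (z/r))" for k
  have A_eq: "A k = 2 * \<epsilon>0 * b (k+1) * r^k" for k
  proof -
    define d where "d k = A k - 2 * \<epsilon>0 * b (k+1) * r^k" for k
    have "(\<lambda>k. d k * t^k) sums 0" if t: "t \<noteq> 0" "\<bar>t\<bar> < 1/4" for t
    proof -
      define s where "s = r * t"
      have st: "s / r = t" using r_pos by (simp add: s_def)
      have sabs: "\<bar>s\<bar> < r/4" using t r_pos by (simp add: s_def abs_mult)
      then have sin: "s \<in> {-r<..<r}" by auto
      have ph: "\<phi>0 s = - (\<Sum>i=1..n+1. b i * s ^ (i - 1))" using phi_axis[OF sin] by linarith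
      have ph2: "- 2 * \<epsilon>0 * \<phi>0 s = 2 * \<epsilon>0 * (\<Sum>i=1..n+1. b i * s ^ (i - 1))"
        unfolding ph by (simp only: mult_minus_left minus_mult_minus)
      have s1: "(\<lambda>k. A k * t^k) sums (2 * \<epsilon>0 * (\<Sum>i=1..n+1. b i * s ^ (i - 1)))"
        using series_integral[OF r_pos sabs, of \<sigma>]
        unfolding A_def st integral_eq[OF sin] ph2 by simp
      have s2: "(\<lambda>k. 2 * \<epsilon>0 * b (k+1) * r^k * t^k) sums (\<Sum>k\<in>{..<n+1}. 2 * \<epsilon>0 * b (k+1) * r^k * t^k)"
        by (rule sums_finite) (auto intro!: b_zero)
      have "(\<Sum>k\<in>{..<n+1}. 2 * \<epsilon>0 * b (k+1) * r^k * t^k) = 2 * \<epsilon>0 * (\<Sum>i=1..n+1. b i * s ^ (i - 1))"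
      proof -
        have re: "(\<Sum>i=1..n+1. b i * s^(i-1)) = (\<Sum>k<n+1. b (Suc k) * s^k)"
          using sum.atLeast1_atMost_eq[of "\<lambda>i. b i * s^(i-1)" "n+1"] by simp
        show ?thesis unfolding re sum_distrib_left
          by (rule sum.cong) (simp_all add: s_def power_mult_distrib)
      qed
      then have "(\<lambda>k. A k * t^k - 2 * \<epsilon>0 * b (k+1) * r^k * t^k) sums 0"
        using sums_diff[OF s1 s2] by simp
      then show ?thesis unfolding d_def by (simp add: algebra_simps)
    qed
    then have "d k = 0" by (intro powser_unique0[of "1/4"]) auto
    then show ?thesis unfolding d_def by simp
  qed
  have contP: "continuous_on {-r..r} (\<lambda>z. poly \<sigma> z * legendreP k (z/r))" for k
    by (intro continuous_intros continuous_on_compose2[OF legendre_cont[of UNIV k]]) (use r_pos in auto)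
  have "integral {-r..r} (\<lambda>z. z^m * poly \<sigma> z)
      = integral {-r..r} (\<lambda>z. \<Sum>k\<le>m. r^m * ((2*real k+1)/2 * Iint k m) * (poly \<sigma> z * legendreP k (z/r)))"
  proof (rule integral_cong)
    fix z
    have "z^m = r^m * (z/r)^m" using r_pos by (simp add: power_divide)
    also have "\<dots> = r^m * (\<Sum>k\<le>m. (2*real k+1)/2 * Iint k m * legendreP k (z/r))"
      by (subst expansion[of "z/r" m]) simp
    finally show "z^m * poly \<sigma> z = (\<Sum>k\<le>m. r^m * ((2*real k+1)/2 * Iint k m) * (poly \<sigma> z * legendreP k (z/r)))"
      by (simp add: sum_distrib_left sum_distrib_right algebra_simps)
  qed
  also have "\<dots> = (\<Sum>k\<le>m. r^m * ((2*real k+1)/2 * Iint k m) * A k)"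
    unfolding A_def
    by (subst integral_sum) (auto intro!: integrable_continuous_interval continuous_intros contP)
  finally have mom: "integral {-r..r} (\<lambda>z. z^m * poly \<sigma> z) = (\<Sum>k\<le>m. r^m * ((2*real k+1)/2 * Iint k m) * A k)" .
  define h where "h i = (2 * real i - 1) * r ^ (i - 1) * F i (m + 1) * b i" for i
  define S where "S = {i \<in> {(if even m then 1 else 2)..m + 1}. i mod 2 = (if even m then 1 else 2) mod 2}"
  have hF: "F i (m+1) = Iint (i-1) m" for i unfolding F_def Iint_def by simp
  have hF': "F (Suc k) (Suc m) = Iint k m" for k unfolding F_def Iint_def by simp
  have "(\<Sum>i\<in>S. h i) = (\<Sum>i\<in>{Suc 0..Suc m}. h i)"
  proof (rule sum.mono_neutral_left)
    show "S \<subseteq> {Suc 0..Suc m}" unfolding S_def by auto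
    show "\<forall>i\<in>{Suc 0..Suc m} - S. h i = 0"
    proof
      fix i assume i: "i \<in> {Suc 0..Suc m} - S"
      have "\<not> (i - 1 \<le> m \<and> even (m - (i - 1)))"
        using i unfolding S_def by (auto split: if_splits; presburger)
      then show "h i = 0" unfolding h_def hF by (simp add: Iint_zero)
    qed
  qed simp
  also have "\<dots> = (\<Sum>k\<le>m. h (Suc k))"
    by (simp only: sum.shift_bounds_cl_Suc_ivl atLeast0AtMost)
  finally have hs: "(\<Sum>i\<in>S. h i) = (\<Sum>k\<le>m. h (Suc k))" .
  have "dipole r (poly \<sigma>) m = 2 * pi * r * (\<Sum>k\<le>m. r^m * ((2*real k+1)/2 * Iint k m) * A k)"
    unfolding dipole_def mom by simp
  also have "\<dots> = 2 * pi * \<epsilon>0 * r ^ (m + 1) * (\<Sum>k\<le>m. h (Suc k))"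
    unfolding sum_distrib_left
    by (rule sum.cong) (simp_all add: A_eq h_def hF' power_add algebra_simps)
  finally show "dipole r (poly \<sigma>) m = 2 * pi * \<epsilon>0 * r ^ (m + 1) *
       (\<Sum>i \<in> {i \<in> {(if even m then 1 else 2)..m + 1}.
                    i mod 2 = (if even m then 1 else 2) mod 2}.
          (2 * real i - 1) * r ^ (i - 1) * F i (m + 1) * b i)"
    using hs unfolding S_def h_def by simp
qed

end
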